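(* Let $n\ge 0$ be an integer and for $k\in\mathbb{Z}_+$ let $v_k(t)=c_k\,e^{-\frac{t^{2n+2}}{2n+2}}L^{(-\frac{1}{2n+2})}_{k}\!\left(\frac{t^{2n+2}}{n+1}\right)$ with $c_k>0$ chosen so that $\|t^nv_k\|_{L^2(\mathbb{R})}=1$. Let $0<\delta\le\frac12$, $B=\frac{1-\delta^{2n+1}}{2n+2}$, and let $C_0>0$ be a constant independent of $k$ such that $|v_k(t)|\le C_0^{k+1}e^{-Bt^{2n+2}}$ for all $k$ and $t$. Then for every $B'$ with $0<B'<B$ there is a constant $C_1>0$ independent of $k$, with $C_1=\mathscr{O}((B-B')^{-2})$, such that $$|v_k'(t)|\le C_1C_0^{\,k}e^{-B't^{2n+2}}$$ for all $k\in\mathbb{Z}_+$ and $t\in\mathbb{R}$.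
   Context: $L^{(a)}_k$ denotes the generalized Laguerre polynomial of degree $k$ and parameter $a$. $v_k$ solves $-v_k''+t^{2(2n+1)}v_k=E_kt^{2n}v_k$ with $E_k=4k(n+1)+2n+1$. *)

theory Defs
  imports "HOL-Analysis.Analysis"
begin

definition gen_laguerre :: "real \<Rightarrow> nat \<Rightarrow> real \<Rightarrow> real" where
  "gen_laguerre a k x =
     (\<Sum>i\<le>k. (-1) ^ i * ((real k + a) gchoose (k - i)) * x ^ i / fact i)"

definition v_unnorm :: "nat \<Rightarrow> nat \<Rightarrow> real \<Rightarrow> real" where
  "v_unnorm n k t =
     exp (- (t ^ (2*n+2)) / (2 * real n + 2)) *
     gen_laguerre (- 1 / (2 * real n + 2)) k (t ^ (2*n+2) / (real n + 1))"

end

theory Submission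
  imports Defs "HOL-Computational_Algebra.Formal_Power_Series"
begin



lemma pow_le_fact_exp:
  fixes x :: real assumes "0 \<le> x" shows "x ^ N \<le> fact N * exp x"
proof -
  have s: "(\<lambda>n. x ^ n /\<^sub>R fact n) sums exp x" by (rule exp_converges)
  have "sum (\<lambda>n. x ^ n /\<^sub>R fact n) {N} \<le> suminf (\<lambda>n. x ^ n /\<^sub>R fact n)"
    by (rule sum_le_suminf) (use s assms in \<open>auto simp: sums_iff\<close>)
  then have h: "inverse (fact N) * x ^ N \<le> exp x" using s by (simp add: sums_iff)
  have "x ^ N = fact N * (inverse (fact N) * x ^ N)" by simp
  also have "\<dots> \<le> fact N * exp x" by (rule mult_left_mono[OF h]) simp
  finally show ?thesis .
qed

lemma gbound:
  fixes \<rho> :: real assumes "\<rho> > 0"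
  shows "\<exists>M. \<forall>t. \<bar>t ^ N * exp (- \<rho> * t ^ (2*n+2))\<bar> \<le> M * exp (- \<bar>t\<bar>)"
proof -
  define T where "T = max 1 (2/\<rho>)"
  have T1: "T \<ge> 1" and T2: "T \<ge> 2/\<rho>" by (auto simp: T_def)
  define M where "M = T ^ N * exp T + fact N"
  show ?thesis
  proof (intro exI allI)
    fix t :: real
    have ev: "t ^ (2*n+2) = \<bar>t\<bar> ^ (2*n+2)"
      by (metis even_add even_mult_iff even_numeral power_even_abs)
    have lhs0: "\<bar>t ^ N * exp (- \<rho> * t ^ (2*n+2))\<bar> = \<bar>t\<bar> ^ N * exp (- \<rho> * t ^ (2*n+2))"
      by (simp add: abs_mult power_abs)
    have lhs: "\<bar>t ^ N * exp (- \<rho> * t ^ (2*n+2))\<bar> = \<bar>t\<bar> ^ N * exp (- \<rho> * \<bar>t\<bar> ^ (2*n+2))"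
      using lhs0 by (simp only: ev)
    have key: "\<bar>t\<bar> ^ N * exp (- \<rho> * \<bar>t\<bar> ^ (2*n+2)) \<le> M * exp (- \<bar>t\<bar>)"
    proof (cases "\<bar>t\<bar> \<le> T")
      case True
      have "\<bar>t\<bar> ^ N \<le> T ^ N" using True by (simp add: power_mono)
      moreover have "exp (- \<rho> * \<bar>t\<bar> ^ (2*n+2)) \<le> 1" using assms by simp
      ultimately have "\<bar>t\<bar> ^ N * exp (- \<rho> * \<bar>t\<bar> ^ (2*n+2)) \<le> T ^ N * 1"
        using T1 by (intro mult_mono) auto
      also have "T ^ N * 1 = T ^ N * exp T * exp (- T)" by (simp add: exp_minus)
      also have "\<dots> \<le> T ^ N * exp T * exp (- \<bar>t\<bar>)"
        using True T1 by (intro mult_left_mono) auto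
      also have "\<dots> \<le> M * exp (- \<bar>t\<bar>)" by (intro mult_right_mono) (auto simp: M_def)
      finally show ?thesis .
    next
      case False
      have "\<bar>t\<bar> ^ 2 \<le> \<bar>t\<bar> ^ (2*n+2)" using False T1 by (intro power_increasing) auto
      moreover have "2 * \<bar>t\<bar> \<le> \<rho> * \<bar>t\<bar> ^ 2"
      proof -
        have "2/\<rho> \<le> \<bar>t\<bar>" using False T2 by simp
        then have "2 \<le> \<rho> * \<bar>t\<bar>" using assms by (simp add: field_simps)
        then have "2 * \<bar>t\<bar> \<le> (\<rho> * \<bar>t\<bar>) * \<bar>t\<bar>" by (intro mult_right_mono) auto
        then show ?thesis by (simp add: power2_eq_square mult.assoc)
      qed
      moreover have "\<rho> * \<bar>t\<bar> ^ 2 \<le> \<rho> * \<bar>t\<bar> ^ (2*n+2)"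
        using calculation(1) assms by (intro mult_left_mono) auto
      ultimately have "2 * \<bar>t\<bar> \<le> \<rho> * \<bar>t\<bar> ^ (2*n+2)" by linarith
      then have e: "exp (- \<rho> * \<bar>t\<bar> ^ (2*n+2)) \<le> exp (- \<bar>t\<bar>) * exp (- \<bar>t\<bar>)"
        by (simp add: exp_add[symmetric])
      have "\<bar>t\<bar> ^ N * exp (- \<rho> * \<bar>t\<bar> ^ (2*n+2)) \<le> (fact N * exp \<bar>t\<bar>) * (exp (- \<bar>t\<bar>) * exp (- \<bar>t\<bar>))"
        by (intro mult_mono pow_le_fact_exp e) auto
      also have "\<dots> = fact N * exp (\<bar>t\<bar> + (- \<bar>t\<bar> + - \<bar>t\<bar>))" by (simp only: exp_add mult.assoc)
      also have "\<dots> = fact N * exp (- \<bar>t\<bar>)" by simp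
      also have "\<dots> \<le> M * exp (- \<bar>t\<bar>)" using T1 by (intro mult_right_mono) (auto simp: M_def)
      finally show ?thesis .
    qed
    show "\<bar>t ^ N * exp (- \<rho> * t ^ (2*n+2))\<bar> \<le> M * exp (- \<bar>t\<bar>)"
      unfolding lhs by (rule key)
  qed
qed

lemma has_integral_reflect_UNIV:
  fixes f :: "real \<Rightarrow> real"
  assumes "(f has_integral i) UNIV"
  shows "((\<lambda>x. f (- x)) has_integral i) UNIV"
proof -
  have nc: "\<not> (\<exists>a b. (UNIV::real set) = cbox a b)"
    by (metis bounded_cbox not_bounded_UNIV)
  show ?thesis
  proof (subst has_integral_alt, simp only: nc if_False UNIV_I if_True, intro allI impI)
    fix e :: real assume "e > 0"
    from has_integral_altD[OF assms nc this] obtain B where B: "B > 0"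
      "\<forall>a b. ball 0 B \<subseteq> cbox a b \<longrightarrow> (\<exists>z. (f has_integral z) (cbox a b) \<and> norm (z - i) < e)"
      by auto
    have "\<forall>a b. ball 0 B \<subseteq> cbox a b \<longrightarrow> (\<exists>z. ((\<lambda>x. f (- x)) has_integral z) (cbox a b) \<and> norm (z - i) < e)"
    proof (intro allI impI)
      fix a b :: real assume "ball 0 B \<subseteq> cbox a b"
      then have "ball 0 B \<subseteq> cbox (-b) (-a)"
      proof (intro subsetI)
        fix x :: real assume ab: "ball 0 B \<subseteq> cbox a b" and x: "x \<in> ball 0 B"
        then have "-x \<in> ball 0 B" by (simp add: dist_real_def)
        then have "-x \<in> cbox a b" using ab by blast
        then show "x \<in> cbox (-b) (-a)" by auto
      qed
      with B obtain z where "(f has_integral z) (cbox (-b) (-a))" "norm (z - i) < e" by blast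
      then show "\<exists>z. ((\<lambda>x. f (- x)) has_integral z) (cbox a b) \<and> norm (z - i) < e"
        using has_integral_reflect[of f z "-a" "-b"] by auto
    qed
    then show "\<exists>B>0. \<forall>a b. ball 0 B \<subseteq> cbox a b \<longrightarrow> (\<exists>z. ((\<lambda>x. f (- x)) has_integral z) (cbox a b) \<and> norm (z - i) < e)"
      using B(1) by blast
  qed
qed


lemma expabs_dom: "\<exists>g. g integrable_on UNIV \<and> (\<forall>t::real. exp (- \<bar>t\<bar>) \<le> g t)"
proof -
  define h where "h = (\<lambda>t::real. if t \<in> {0..} then exp (- 1 * t) else 0)"
  have "((\<lambda>x::real. exp (- 1 * x)) has_integral exp (- 1 * 0) / 1) {0..}"
    by (rule has_integral_exp_minus_to_infinity) simp
  then have h1: "(h has_integral 1) UNIV"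
    unfolding h_def using has_integral_restrict_UNIV[of "{0::real..}" "\<lambda>x. exp (- 1 * x)" 1] by simp
  have h2: "((\<lambda>t. h (- t)) has_integral 1) UNIV" by (rule has_integral_reflect_UNIV[OF h1])
  have "((\<lambda>t. h t + h (- t)) has_integral (1 + 1)) UNIV" by (rule has_integral_add[OF h1 h2])
  then have "(\<lambda>t. h t + h (- t)) integrable_on UNIV" by blast
  moreover have "\<forall>t. exp (- \<bar>t\<bar>) \<le> h t + h (- t)"
    by (auto simp: h_def)
  ultimately show ?thesis by blast
qed

lemma g_int:
  fixes \<rho> :: real assumes "\<rho> > 0"
  shows "(\<lambda>t. t ^ N * exp (- \<rho> * t ^ (2*n+2))) integrable_on UNIV"
proof -
  obtain M where M: "\<And>t. \<bar>t ^ N * exp (- \<rho> * t ^ (2*n+2))\<bar> \<le> M * exp (- \<bar>t\<bar>)"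
    using gbound[OF assms, of N n] by blast
  have "0 \<le> M * exp (- \<bar>0::real\<bar>)" using M[of 0] abs_ge_zero order_trans by blast
  then have M0: "M \<ge> 0" by simp
  obtain g :: "real \<Rightarrow> real" where g: "g integrable_on UNIV" "\<And>t. exp (- \<bar>t\<bar>) \<le> g t" using expabs_dom by blast
  show ?thesis
  proof (rule integrable_on_all_intervals_UNIV)
    show "(\<lambda>t. t ^ N * exp (- \<rho> * t ^ (2*n+2))) integrable_on cbox a b" for a b
      by (intro integrable_continuous continuous_intros)
    show "norm (t ^ N * exp (- \<rho> * t ^ (2*n+2))) \<le> M * g t" for t
      using M[of t] mult_left_mono[OF g(2)[of t] M0] unfolding real_norm_def by linarith
    show "(\<lambda>t. M * g t) integrable_on UNIV" using integrable_cmul[OF g(1), of M] by simp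
  qed
qed

lemma ftc_zero:
  fixes F f :: "real \<Rightarrow> real"
  assumes der: "\<And>x. (F has_real_derivative f x) (at x)"
    and fi: "f integrable_on UNIV"
    and lt: "(F \<longlongrightarrow> 0) at_top" and lb: "(F \<longlongrightarrow> 0) at_bot"
  shows "integral UNIV f = 0"
proof (rule ccontr)
  define I where "I = integral UNIV f"
  assume "integral UNIV f \<noteq> 0"
  then have e: "\<bar>I\<bar> / 4 > 0" by (simp add: I_def)
  have nc: "\<not> (\<exists>a b. (UNIV::real set) = cbox a b)"
    by (metis bounded_cbox not_bounded_UNIV)
  obtain B where B: "B > 0"
      "\<forall>a b. ball 0 B \<subseteq> cbox a b \<longrightarrow> (\<exists>z. ((\<lambda>x. if x \<in> UNIV then f x else 0) has_integral z) (cbox a b) \<and> norm (z - I) < \<bar>I\<bar> / 4)"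
    using has_integral_altD[OF integrable_integral[OF fi] nc e] unfolding I_def by blast
  have "eventually (\<lambda>x. \<bar>F x\<bar> < \<bar>I\<bar> / 4) at_top"
    using tendstoD[OF lt e] by (simp add: dist_real_def)
  then obtain R1 where R1: "\<And>x. x \<ge> R1 \<Longrightarrow> \<bar>F x\<bar> < \<bar>I\<bar> / 4" by (auto simp: eventually_at_top_linorder)
  have "eventually (\<lambda>x. \<bar>F x\<bar> < \<bar>I\<bar> / 4) at_bot"
    using tendstoD[OF lb e] by (simp add: dist_real_def)
  then obtain R2 where R2: "\<And>x. x \<le> R2 \<Longrightarrow> \<bar>F x\<bar> < \<bar>I\<bar> / 4" by (auto simp: eventually_at_bot_linorder)
  define R where "R = max B (max R1 (- R2))"
  have sub: "ball 0 B \<subseteq> cbox (- R) R"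
    by (auto simp: R_def dist_real_def subset_iff)
  then obtain z where z: "(f has_integral z) (cbox (-R) R)" "norm (z - I) < \<bar>I\<bar> / 4"
    using B(2)[rule_format, OF sub] by auto
  have "(f has_integral (F R - F (- R))) {- R..R}"
  proof (rule fundamental_theorem_of_calculus)
    show "- R \<le> R" using B(1) by (simp add: R_def)
    show "(F has_vector_derivative f x) (at x within {- R..R})" if "x \<in> {- R..R}" for x
      using der[of x] has_field_derivative_at_within has_real_derivative_iff_has_vector_derivative by blast
  qed
  then have "z = F R - F (- R)" using z(1) unfolding interval_cbox by (rule has_integral_unique[rotated])
  moreover have "\<bar>F R\<bar> < \<bar>I\<bar> / 4" by (rule R1) (simp add: R_def)
  moreover have "\<bar>F (- R)\<bar> < \<bar>I\<bar> / 4" by (rule R2) (simp add: R_def)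
  moreover have "\<bar>z - I\<bar> < \<bar>I\<bar> / 4" using z(2) by simp
  ultimately show False using e by arith
qed


lemma expabs_lim:
  "((\<lambda>t::real. exp (- \<bar>t\<bar>)) \<longlongrightarrow> 0) at_top" "((\<lambda>t::real. exp (- \<bar>t\<bar>)) \<longlongrightarrow> 0) at_bot"
proof -
  have "filterlim (\<lambda>t::real. - \<bar>t\<bar>) at_bot at_top"
    unfolding filterlim_at_bot
  proof
    fix Z :: real show "eventually (\<lambda>t. - \<bar>t\<bar> \<le> Z) at_top"
      unfolding eventually_at_top_linorder by (rule exI[of _ "\<bar>Z\<bar>"]) auto
  qed
  from filterlim_compose[OF exp_at_bot this] show "((\<lambda>t::real. exp (- \<bar>t\<bar>)) \<longlongrightarrow> 0) at_top" .
  have "filterlim (\<lambda>t::real. - \<bar>t\<bar>) at_bot at_bot"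
    unfolding filterlim_at_bot
  proof
    fix Z :: real show "eventually (\<lambda>t. - \<bar>t\<bar> \<le> Z) at_bot"
      unfolding eventually_at_bot_linorder by (rule exI[of _ "- \<bar>Z\<bar>"]) auto
  qed
  from filterlim_compose[OF exp_at_bot this] show "((\<lambda>t::real. exp (- \<bar>t\<bar>)) \<longlongrightarrow> 0) at_bot" .
qed

lemma F_lim:
  fixes \<rho> :: real assumes "\<rho> > 0"
  shows "((\<lambda>t. t ^ N * exp (- \<rho> * t ^ (2*n+2))) \<longlongrightarrow> 0) at_top"
    "((\<lambda>t. t ^ N * exp (- \<rho> * t ^ (2*n+2))) \<longlongrightarrow> 0) at_bot"
proof -
  obtain M where M: "\<And>t. \<bar>t ^ N * exp (- \<rho> * t ^ (2*n+2))\<bar> \<le> M * exp (- \<bar>t\<bar>)"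
    using gbound[OF assms, of N n] by blast
  have ev: "eventually (\<lambda>t. norm (t ^ N * exp (- \<rho> * t ^ (2*n+2))) \<le> M * exp (- \<bar>t\<bar>)) F" for F
    using M by (simp add: always_eventually)
  show "((\<lambda>t. t ^ N * exp (- \<rho> * t ^ (2*n+2))) \<longlongrightarrow> 0) at_top"
    by (rule Lim_null_comparison[OF ev]) (use tendsto_mult_right_zero[OF expabs_lim(1), of M] in simp)
  show "((\<lambda>t. t ^ N * exp (- \<rho> * t ^ (2*n+2))) \<longlongrightarrow> 0) at_bot"
    by (rule Lim_null_comparison[OF ev]) (use tendsto_mult_right_zero[OF expabs_lim(2), of M] in simp)
qed

lemma pow_pred1: "real m * x ^ (m - Suc 0) * x = real m * (x::real) ^ m"
  by (cases m) auto

lemma pow_pred2: "2 * real n * x ^ (2 * n - Suc 0) * x = 2 * real n * (x::real) ^ (2 * n)"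
  by (cases n) auto

lemma moment_rec:
  fixes \<rho> :: real assumes "\<rho> > 0"
  shows "\<rho> * (2 * real n + 2) * integral UNIV (\<lambda>t. t ^ (N + (2*n+2)) * exp (- \<rho> * t ^ (2*n+2)))
       = real (N + 1) * integral UNIV (\<lambda>t. t ^ N * exp (- \<rho> * t ^ (2*n+2)))"
proof -
  define g where "g = (\<lambda>K t. t ^ K * exp (- \<rho> * t ^ (2*n+2)))"
  define f where "f = (\<lambda>t. real (N + 1) * g N t - \<rho> * (2 * real n + 2) * g (N + (2*n+2)) t)"
  have gi: "g K integrable_on UNIV" for K unfolding g_def by (rule g_int[OF assms])
  have fi: "f integrable_on UNIV" unfolding f_def
    by (intro integrable_diff) (use integrable_cmul[OF gi, of "real (N+1)"] integrable_cmul[OF gi, of "\<rho> * (2 * real n + 2)"] in simp_all)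
  have der: "(g (N+1) has_real_derivative f x) (at x)" for x
  proof -
    have d1: "((\<lambda>t. t ^ (N+1)) has_real_derivative real (N+1) * x ^ N) (at x)"
      using DERIV_pow[of "N+1" x] by simp
    have d2: "((\<lambda>t. - \<rho> * t ^ (2*n+2)) has_real_derivative - \<rho> * (real (2*n+2) * x ^ (2*n+1))) (at x)"
      using DERIV_cmult[OF DERIV_pow[of "2*n+2" x], of "- \<rho>"] by simp
    have d3: "((\<lambda>t. exp (- \<rho> * t ^ (2*n+2))) has_real_derivative exp (- \<rho> * x ^ (2*n+2)) * (- \<rho> * (real (2*n+2) * x ^ (2*n+1)))) (at x)"
      by (rule DERIV_chain2[OF DERIV_exp d2])
    have d: "(g (N+1) has_real_derivative real (N+1) * x ^ N * exp (- \<rho> * x ^ (2*n+2)) + exp (- \<rho> * x ^ (2*n+2)) * (- \<rho> * (real (2*n+2) * x ^ (2*n+1))) * x ^ (N+1)) (at x)"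
      unfolding g_def by (rule DERIV_mult[OF d1 d3])
    have "real (N+1) * x ^ N * exp (- \<rho> * x ^ (2*n+2)) + exp (- \<rho> * x ^ (2*n+2)) * (- \<rho> * (real (2*n+2) * x ^ (2*n+1))) * x ^ (N+1) = f x"
    proof -
      have h: "x ^ (2*n+1) * x ^ (N+1) = x ^ (N + (2*n+2))"
      proof -
        have "N + (2*n+2) = (2*n+1) + (N+1)" by simp
        then show ?thesis by (simp only: power_add)
      qed
      have e1: "(E::real) * (- \<rho> * (real (2*n+2) * a)) * b = - (\<rho> * (2 * real n + 2) * ((a * b) * E))" for E a b
        by (simp add: algebra_simps)
      have "exp (- \<rho> * x ^ (2*n+2)) * (- \<rho> * (real (2*n+2) * x ^ (2*n+1))) * x ^ (N+1)
          = - (\<rho> * (2 * real n + 2) * (x ^ (N + (2*n+2)) * exp (- \<rho> * x ^ (2*n+2))))"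
        unfolding e1 h ..
      then show ?thesis unfolding f_def g_def by (simp only: diff_conv_add_uminus mult.assoc)
    qed
    then show ?thesis using d by simp
  qed
  have "integral UNIV f = 0"
    by (rule ftc_zero[OF der fi]) (use F_lim[OF assms, of "N+1" n] in \<open>simp_all add: g_def\<close>)
  moreover have "integral UNIV f = real (N + 1) * integral UNIV (g N) - \<rho> * (2 * real n + 2) * integral UNIV (g (N + (2*n+2)))"
    unfolding f_def
    by (subst integral_diff) (use integrable_cmul[OF gi, of "real (N+1)"] integrable_cmul[OF gi, of "\<rho> * (2 * real n + 2)"] in simp_all)
  ultimately show ?thesis unfolding g_def by simp
qed



lemma vand: "(\<Sum>i\<le>k. ((A::real) gchoose i) * (B gchoose (k - i))) = (A + B) gchoose k"
  using gbinomial_Vandermonde[of A B k] by (simp add: atLeast0AtMost)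

lemma inner_id:
  fixes a :: real and k j :: nat
  shows "(\<Sum>i\<le>k. (-1) ^ i * ((real k + a) gchoose (k - i)) / fact i * pochhammer (a + 1 + real j) i)
         = (real k - 1 - real j) gchoose k"
proof -
  have "(\<Sum>i\<le>k. (-1) ^ i * ((real k + a) gchoose (k - i)) / fact i * pochhammer (a + 1 + real j) i)
      = (\<Sum>i\<le>k. ((- (a + 1 + real j)) gchoose i) * ((real k + a) gchoose (k - i)))"
  proof (rule sum.cong[OF refl])
    fix i assume "i \<in> {..k}"
    have "(- (a + 1 + real j)) gchoose i = (-1) ^ i * pochhammer (a + 1 + real j) i / fact i"
      using gbinomial_pochhammer[of "- (a + 1 + real j)" i] by (simp only: minus_minus)
    then show "(-1) ^ i * ((real k + a) gchoose (k - i)) / fact i * pochhammer (a + 1 + real j) i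
        = ((- (a + 1 + real j)) gchoose i) * ((real k + a) gchoose (k - i))" by simp
  qed
  also have "\<dots> = (- (a + 1 + real j) + (real k + a)) gchoose k" by (rule vand)
  also have "- (a + 1 + real j) + (real k + a) = real k - 1 - real j" by simp
  finally show ?thesis .
qed

lemma gchoose_small: "j < k \<Longrightarrow> (real k - 1 - real j) gchoose k = 0"
proof -
  assume "j < k"
  then have "real k - 1 - real j = real (k - 1 - j)" by auto
  moreover have "real (k - 1 - j) gchoose k = real ((k - 1 - j) choose k)" by (simp add: binomial_gbinomial)
  moreover have "(k - 1 - j) choose k = 0" using \<open>j < k\<close> by simp
  ultimately show ?thesis by simp
qed

lemma gchoose_m1: "(real k - 1 - real k) gchoose k = (-1) ^ k"
proof -
  have "(real k - 1 - real k) = - 1" by simp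
  moreover have "((- 1::real) gchoose k) = (-1) ^ k * ((1 + real k - 1) gchoose k)"
    by (rule gbinomial_minus)
  moreover have "real k gchoose k = 1" using binomial_gbinomial[of k k] by simp
  ultimately show ?thesis by simp
qed


definition lc :: "real \<Rightarrow> nat \<Rightarrow> nat \<Rightarrow> real" where
  "lc a k i = (-1) ^ i * ((real k + a) gchoose (k - i)) / fact i"

lemma gen_laguerre_lc: "gen_laguerre a k x = (\<Sum>i\<le>k. lc a k i * x ^ i)"
  unfolding gen_laguerre_def lc_def by (simp add: field_simps)

lemma double_id:
  "(\<Sum>i\<le>k. \<Sum>j\<le>k. lc a k i * lc a k j * pochhammer (a + 1) (i + j)) = pochhammer (a + 1) k / fact k"
proof -
  have "(\<Sum>i\<le>k. \<Sum>j\<le>k. lc a k i * lc a k j * pochhammer (a + 1) (i + j))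
      = (\<Sum>j\<le>k. lc a k j * pochhammer (a + 1) j * (\<Sum>i\<le>k. lc a k i * pochhammer (a + 1 + real j) i))"
  proof -
    have p: "pochhammer (a + 1) (i + j) = pochhammer (a + 1) j * pochhammer (a + 1 + real j) i" for i j
      using pochhammer_product'[of "a+1" j i] by (simp add: add.commute)
    have "(\<Sum>i\<le>k. \<Sum>j\<le>k. lc a k i * lc a k j * pochhammer (a + 1) (i + j))
       = (\<Sum>j\<le>k. \<Sum>i\<le>k. lc a k i * lc a k j * pochhammer (a + 1) (i + j))" by (rule sum.swap)
    also have "\<dots> = (\<Sum>j\<le>k. \<Sum>i\<le>k. lc a k j * pochhammer (a + 1) j * (lc a k i * pochhammer (a + 1 + real j) i))"
      by (intro sum.cong refl) (simp only: p, simp add: algebra_simps)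
    also have "\<dots> = (\<Sum>j\<le>k. lc a k j * pochhammer (a + 1) j * (\<Sum>i\<le>k. lc a k i * pochhammer (a + 1 + real j) i))"
      by (simp add: sum_distrib_left)
    finally show ?thesis .
  qed
  also have "\<dots> = (\<Sum>j\<le>k. lc a k j * pochhammer (a + 1) j * ((real k - 1 - real j) gchoose k))"
    using inner_id[of k a] by (simp add: lc_def)
  also have "\<dots> = lc a k k * pochhammer (a + 1) k * ((real k - 1 - real k) gchoose k)"
    by (subst sum.atMost_Suc_shift[symmetric, of _ k, THEN sym, THEN sym] | simp add: atMost_Suc[symmetric])?
       (rule trans[OF sum.remove[of _ k]], auto intro!: sum.neutral simp: gchoose_small)
  also have "\<dots> = pochhammer (a + 1) k / fact k"
    unfolding gchoose_m1 lc_def by (simp add: power_mult_distrib[symmetric])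
  finally show ?thesis .
qed


lemma lc_poch:
  assumes "i \<le> k"
  shows "lc a k i * pochhammer (a + 1) i = (-1) ^ i * (pochhammer (a + 1) k / fact k) * real (k choose i)"
proof -
  have g: "(real k + a) gchoose (k - i) = pochhammer (a + 1 + real i) (k - i) / fact (k - i)"
  proof -
    have eq: "real k + a - real (k - i) + 1 = a + 1 + real i" using assms by (simp add: of_nat_diff)
    show ?thesis unfolding gbinomial_pochhammer' eq by (rule refl)
  qed
  have p: "pochhammer (a + 1) k = pochhammer (a + 1) i * pochhammer (a + 1 + real i) (k - i)"
    using pochhammer_product'[of "a+1" i "k - i"] assms by simp
  have b: "real (k choose i) = fact k / (fact i * fact (k - i))"
    using binomial_fact[OF assms] by simp
  show ?thesis
    unfolding lc_def g p b by (simp add: field_simps)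
qed

lemma laplace_id:
  "(\<Sum>i\<le>k. lc a k i * pochhammer (a + 1) i * y ^ i) = pochhammer (a + 1) k / fact k * (1 - y) ^ k"
proof -
  have "(\<Sum>i\<le>k. lc a k i * pochhammer (a + 1) i * y ^ i)
      = (\<Sum>i\<le>k. (pochhammer (a + 1) k / fact k) * (real (k choose i) * (- y) ^ i * 1 ^ (k - i)))"
  proof (rule sum.cong[OF refl])
    fix i assume "i \<in> {..k}"
    then have "lc a k i * pochhammer (a + 1) i = (-1) ^ i * (pochhammer (a + 1) k / fact k) * real (k choose i)"
      by (intro lc_poch) simp
    moreover have "(- y) ^ i = (-1) ^ i * y ^ i" by (rule power_minus)
    ultimately show "lc a k i * pochhammer (a + 1) i * y ^ i
        = (pochhammer (a + 1) k / fact k) * (real (k choose i) * (- y) ^ i * 1 ^ (k - i))"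
      by simp
  qed
  also have "\<dots> = (pochhammer (a + 1) k / fact k) * (\<Sum>i\<le>k. real (k choose i) * (- y) ^ i * 1 ^ (k - i))"
    by (rule sum_distrib_left[symmetric])
  also have "\<dots> = (pochhammer (a + 1) k / fact k) * (- y + 1) ^ k"
    by (simp only: binomial_ring)
  finally show ?thesis by simp
qed


lemma lc_succ:
  assumes "i \<le> k"
  shows "lc (b + 1) (Suc k) i = lc (b + 1) k i + lc b (Suc k) i"
proof -
  have s: "Suc k - i = Suc (k - i)" using assms by simp
  have A: "real (Suc k) + (b + 1) = (real (Suc k) + b) + 1" by simp
  have B: "real k + (b + 1) = real (Suc k) + b" by simp
  show ?thesis unfolding lc_def s A B gbinomial_Suc_Suc by (simp add: field_simps)
qed

lemma lag_succ:
  "gen_laguerre (b + 1) (Suc k) x = gen_laguerre (b + 1) k x + gen_laguerre b (Suc k) x"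
proof -
  have "gen_laguerre (b + 1) (Suc k) x = (\<Sum>i\<le>k. lc (b + 1) (Suc k) i * x ^ i) + lc (b + 1) (Suc k) (Suc k) * x ^ Suc k"
    unfolding gen_laguerre_lc by (rule sum.atMost_Suc)
  also have "(\<Sum>i\<le>k. lc (b + 1) (Suc k) i * x ^ i) = (\<Sum>i\<le>k. lc (b + 1) k i * x ^ i) + (\<Sum>i\<le>k. lc b (Suc k) i * x ^ i)"
  proof -
    have "(\<Sum>i\<le>k. lc (b + 1) (Suc k) i * x ^ i) = (\<Sum>i\<le>k. lc (b + 1) k i * x ^ i + lc b (Suc k) i * x ^ i)"
    proof (rule sum.cong[OF refl])
      fix i assume "i \<in> {..k}"
      then have h: "lc (b + 1) (Suc k) i = lc (b + 1) k i + lc b (Suc k) i" by (intro lc_succ) simp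
      show "lc (b + 1) (Suc k) i * x ^ i = lc (b + 1) k i * x ^ i + lc b (Suc k) i * x ^ i"
        by (simp only: h distrib_right)
    qed
    then show ?thesis by (simp only: sum.distrib)
  qed
  also have "lc (b + 1) (Suc k) (Suc k) = lc b (Suc k) (Suc k)" by (simp add: lc_def)
  finally show ?thesis unfolding gen_laguerre_lc by (simp add: sum.atMost_Suc)
qed

lemma lag_sum: "gen_laguerre (b + 1) k x = (\<Sum>j\<le>k. gen_laguerre b j x)"
proof (induction k)
  case 0
  then show ?case by (simp add: gen_laguerre_def)
next
  case (Suc k)
  then show ?case by (simp add: lag_succ)
qed

lemma lag_deriv:
  "(gen_laguerre b (Suc k) has_real_derivative - gen_laguerre (b + 1) k x) (at x)"
proof -
  have e: "gen_laguerre b (Suc k) = (\<lambda>x. lc b (Suc k) 0 + (\<Sum>i\<le>k. lc b (Suc k) (Suc i) * x ^ Suc i))"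
    by (rule ext) (simp only: gen_laguerre_lc sum.atMost_Suc_shift power_0 mult_1_right)
  have d: "((\<lambda>x. lc b (Suc k) 0 + (\<Sum>i\<le>k. lc b (Suc k) (Suc i) * x ^ Suc i)) has_real_derivative
      0 + (\<Sum>i\<le>k. lc b (Suc k) (Suc i) * (real (Suc i) * x ^ (Suc i - Suc 0)))) (at x)"
    by (intro DERIV_add DERIV_const DERIV_sum DERIV_cmult DERIV_pow)
  have c: "lc b (Suc k) (Suc i) * (real (Suc i) * x ^ (Suc i - Suc 0)) = - (lc (b + 1) k i * x ^ i)" if "i \<le> k" for i
  proof -
    have B: "real k + (b + 1) = real (Suc k) + b" by simp
    have f: "fact (Suc i) = real (Suc i) * (fact i :: real)" by simp
    have g: "\<And>p G r f y. (r::real) \<noteq> 0 \<Longrightarrow> f \<noteq> 0 \<Longrightarrow> (- p * G) / (r * f) * (r * y) = - (p * G / f * y)"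
      by (simp add: field_simps)
    show ?thesis unfolding lc_def B f Suc_diff_Suc[OF le_imp_less_Suc[OF that]] diff_Suc_Suc power_Suc minus_one_mult_self
      using g[of "real (Suc i)" "fact i" "(- 1) ^ i" "real (Suc k) + b gchoose k - i" "x ^ i"] by simp
  qed
  have v: "0 + (\<Sum>i\<le>k. lc b (Suc k) (Suc i) * (real (Suc i) * x ^ (Suc i - Suc 0))) = - gen_laguerre (b + 1) k x"
  proof -
    have "(\<Sum>i\<le>k. lc b (Suc k) (Suc i) * (real (Suc i) * x ^ (Suc i - Suc 0))) = (\<Sum>i\<le>k. - (lc (b + 1) k i * x ^ i))"
      by (rule sum.cong[OF refl], rule c, simp)
    then show ?thesis unfolding gen_laguerre_lc by (simp add: sum_negf)
  qed
  show ?thesis unfolding e by (rule DERIV_cong[OF d v])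
qed




definition aa :: "nat \<Rightarrow> real" where "aa n = - 1 / (2 * real n + 2)"

definition Wm :: "nat \<Rightarrow> real \<Rightarrow> nat \<Rightarrow> real" where
  "Wm n \<rho> m = integral UNIV (\<lambda>t. t ^ (2*n + (2*n+2)*m) * exp (- \<rho> * t ^ (2*n+2)))"

lemma W_has:
  assumes "\<rho> > 0"
  shows "((\<lambda>t. t ^ (2*n + (2*n+2)*m) * exp (- \<rho> * t ^ (2*n+2))) has_integral Wm n \<rho> m) UNIV"
  unfolding Wm_def by (rule integrable_integral[OF g_int[OF assms]])

lemma W_step:
  assumes "\<rho> > 0"
  shows "Wm n \<rho> (Suc m) = Wm n \<rho> m * (aa n + 1 + real m) / \<rho>"
proof -
  have e: "2*n + (2*n+2)*m + (2*n+2) = 2*n + (2*n+2) * Suc m" by simp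
  have r: "\<rho> * (2 * real n + 2) * Wm n \<rho> (Suc m) = real (2*n + (2*n+2)*m + 1) * Wm n \<rho> m"
    using moment_rec[OF assms, of n "2*n + (2*n+2)*m"] unfolding e Wm_def by simp
  have "real (2*n + (2*n+2)*m + 1) = (2 * real n + 2) * (aa n + 1 + real m)"
    unfolding aa_def by (simp add: field_simps)
  with r have "\<rho> * (2 * real n + 2) * Wm n \<rho> (Suc m) = (2 * real n + 2) * (Wm n \<rho> m * (aa n + 1 + real m))"
    by simp
  then have "\<rho> * Wm n \<rho> (Suc m) = Wm n \<rho> m * (aa n + 1 + real m)"
    by (smt (verit, best) mult.assoc mult.commute mult_cancel_left of_nat_0_le_iff)
  then show ?thesis using assms by (simp add: field_simps)
qed

lemma W_closed:
  assumes "\<rho> > 0"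
  shows "Wm n \<rho> m = Wm n \<rho> 0 * pochhammer (aa n + 1) m / \<rho> ^ m"
proof (induction m)
  case 0 then show ?case by simp
next
  case (Suc m)
  show ?case unfolding W_step[OF assms] Suc pochhammer_Suc using assms by (simp add: field_simps)
qed


lemma halfsum: "(c::real) > 0 \<Longrightarrow> - y / (2 * c) + - y / (2 * c) = - (1 / c) * y"
  by (simp add: field_simps)

lemma EE:
  fixes t :: real
  shows "exp (- (t ^ (2*n+2)) / (2 * real n + 2)) * exp (- (t ^ (2*n+2)) / (2 * real n + 2)) = exp (- (1 / (real n + 1)) * t ^ (2*n+2))"
proof -
  have c: "2 * real n + 2 = 2 * (real n + 1)" by simp
  have "- (t ^ (2*n+2)) / (2 * real n + 2) + - (t ^ (2*n+2)) / (2 * real n + 2) = - (1 / (real n + 1)) * t ^ (2*n+2)"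
    unfolding c by (rule halfsum) simp
  then show ?thesis by (simp flip: exp_add)
qed

lemma sq_pointwise:
  fixes t :: real
  shows "(t ^ n * v_unnorm n k t)\<^sup>2 =
    (\<Sum>i\<le>k. \<Sum>j\<le>k. (lc (aa n) k i * lc (aa n) k j / (real n + 1) ^ (i + j)) *
        (t ^ (2*n + (2*n+2)*(i+j)) * exp (- (1 / (real n + 1)) * t ^ (2*n+2))))"
proof -
  define X where "X = t ^ (2*n+2) / (real n + 1)"
  define E where "E = exp (- (t ^ (2*n+2)) / (2 * real n + 2))"
  define E2 where "E2 = exp (- (1 / (real n + 1)) * t ^ (2*n+2))"
  define L where "L = gen_laguerre (aa n) k X"
  have v: "v_unnorm n k t = E * L" unfolding v_unnorm_def E_def L_def X_def aa_def by simp
  have "(t ^ n * v_unnorm n k t)\<^sup>2 = (t ^ n * t ^ n) * (E * E) * (L * L)"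
    unfolding v by (simp only: power2_eq_square ac_simps)
  also have "t ^ n * t ^ n = t ^ (2 * n)" by (simp add: power_add[symmetric] mult_2)
  also have "E * E = E2" unfolding E_def E2_def by (rule EE)
  also have "L = (\<Sum>i\<le>k. lc (aa n) k i * X ^ i)" unfolding L_def by (rule gen_laguerre_lc)
  finally have "(t ^ n * v_unnorm n k t)\<^sup>2 = t ^ (2*n) * E2 * ((\<Sum>i\<le>k. lc (aa n) k i * X ^ i) * (\<Sum>j\<le>k. lc (aa n) k j * X ^ j))" .
  also have "\<dots> = (\<Sum>i\<le>k. \<Sum>j\<le>k. t ^ (2*n) * E2 * (lc (aa n) k i * X ^ i * (lc (aa n) k j * X ^ j)))"
    unfolding sum_product by (simp add: sum_distrib_left)
  also have "\<dots> = (\<Sum>i\<le>k. \<Sum>j\<le>k. (lc (aa n) k i * lc (aa n) k j / (real n + 1) ^ (i + j)) *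
        (t ^ (2*n + (2*n+2)*(i+j)) * E2))"
  proof (intro sum.cong refl)
    fix i j
    have a1: "X ^ i * X ^ j = t ^ ((2*n+2)*(i+j)) / (real n + 1) ^ (i + j)"
      unfolding X_def power_add[symmetric] power_divide power_mult by (simp add: power_add)
    have a2: "t ^ (2*n) * t ^ ((2*n+2)*(i+j)) = t ^ (2*n + (2*n+2)*(i+j))" by (simp add: power_add)
    have "t ^ (2*n) * E2 * (lc (aa n) k i * X ^ i * (lc (aa n) k j * X ^ j)) = lc (aa n) k i * lc (aa n) k j * E2 * (t ^ (2*n) * (X ^ i * X ^ j))"
      by (simp only: ac_simps)
    also have "\<dots> = lc (aa n) k i * lc (aa n) k j * E2 * (t ^ (2*n) * t ^ ((2*n+2)*(i+j))) / (real n + 1) ^ (i + j)"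
      unfolding a1 by simp
    also have "\<dots> = (lc (aa n) k i * lc (aa n) k j / (real n + 1) ^ (i + j)) * (t ^ (2*n + (2*n+2)*(i+j)) * E2)"
      unfolding a2 by (simp only: ac_simps times_divide_eq_left times_divide_eq_right)
    finally show "t ^ (2*n) * E2 * (lc (aa n) k i * X ^ i * (lc (aa n) k j * X ^ j)) =
        (lc (aa n) k i * lc (aa n) k j / (real n + 1) ^ (i + j)) * (t ^ (2*n + (2*n+2)*(i+j)) * E2)" .
  qed
  finally show ?thesis unfolding E2_def .
qed


lemma double_sum_integral:
  assumes "\<rho> > 0"
  shows "((\<lambda>t. \<Sum>i\<le>k. \<Sum>j\<le>k. C i j * (t ^ (2*n + (2*n+2)*(i+j)) * exp (- \<rho> * t ^ (2*n+2))))
          has_integral (\<Sum>i\<le>k. \<Sum>j\<le>k. C i j * Wm n \<rho> (i+j))) UNIV"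
  by (intro has_integral_sum finite_atMost has_integral_mult_right W_has assms)

lemma norm_integral:
  "((\<lambda>t. (t ^ n * v_unnorm n k t)\<^sup>2) has_integral
      (Wm n (1 / (real n + 1)) 0 * (pochhammer (aa n + 1) k / fact k))) UNIV"
proof -
  define \<rho> where "\<rho> = 1 / (real n + 1)"
  have \<rho>: "\<rho> > 0" unfolding \<rho>_def by simp
  have "(\<Sum>i\<le>k. \<Sum>j\<le>k. (lc (aa n) k i * lc (aa n) k j / (real n + 1) ^ (i + j)) * Wm n \<rho> (i+j))
      = (\<Sum>i\<le>k. \<Sum>j\<le>k. Wm n \<rho> 0 * (lc (aa n) k i * lc (aa n) k j * pochhammer (aa n + 1) (i + j)))"
  proof (intro sum.cong refl)
    fix i j
    have "\<rho> ^ (i + j) = 1 / (real n + 1) ^ (i + j)" unfolding \<rho>_def by (simp add: power_divide)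
    then show "(lc (aa n) k i * lc (aa n) k j / (real n + 1) ^ (i + j)) * Wm n \<rho> (i+j)
        = Wm n \<rho> 0 * (lc (aa n) k i * lc (aa n) k j * pochhammer (aa n + 1) (i + j))"
      unfolding W_closed[OF \<rho>, of n "i+j"] by simp
  qed
  also have "\<dots> = Wm n \<rho> 0 * (\<Sum>i\<le>k. \<Sum>j\<le>k. lc (aa n) k i * lc (aa n) k j * pochhammer (aa n + 1) (i + j))"
    by (simp add: sum_distrib_left)
  also have "\<dots> = Wm n \<rho> 0 * (pochhammer (aa n + 1) k / fact k)" by (simp only: double_id)
  finally have val: "(\<Sum>i\<le>k. \<Sum>j\<le>k. (lc (aa n) k i * lc (aa n) k j / (real n + 1) ^ (i + j)) * Wm n \<rho> (i+j))
      = Wm n \<rho> 0 * (pochhammer (aa n + 1) k / fact k)" .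
  show ?thesis
    unfolding sq_pointwise \<rho>_def[symmetric] val[symmetric]
    by (rule double_sum_integral[OF \<rho>])
qed


lemma Elap:
  fixes t :: real
  shows "exp (- (t ^ (2*n+2)) / (2 * real n + 2)) * exp (t ^ (2*n+2) / (3 * (2 * real n + 2)))
       = exp (- (1 / (3 * (real n + 1))) * t ^ (2*n+2))"
proof -
  have c: "2 * real n + 2 = 2 * (real n + 1)" by simp
  have g: "\<And>c y. (c::real) > 0 \<Longrightarrow> - y / (2 * c) + y / (3 * (2 * c)) = - (1 / (3 * c)) * y"
    by (simp add: field_simps)
  have "- (t ^ (2*n+2)) / (2 * real n + 2) + t ^ (2*n+2) / (3 * (2 * real n + 2)) = - (1 / (3 * (real n + 1))) * t ^ (2*n+2)"
    unfolding c by (rule g) simp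
  then show ?thesis by (simp flip: exp_add)
qed

lemma lap_pointwise:
  fixes t :: real
  shows "t ^ (2*n) * v_unnorm n k t * exp (t ^ (2*n+2) / (3 * (2 * real n + 2))) =
    (\<Sum>i\<le>k. (lc (aa n) k i / (real n + 1) ^ i) *
        (t ^ (2*n + (2*n+2)*i) * exp (- (1 / (3 * (real n + 1))) * t ^ (2*n+2))))"
proof -
  define X where "X = t ^ (2*n+2) / (real n + 1)"
  define E where "E = exp (- (t ^ (2*n+2)) / (2 * real n + 2))"
  define F where "F = exp (t ^ (2*n+2) / (3 * (2 * real n + 2)))"
  define E2 where "E2 = exp (- (1 / (3 * (real n + 1))) * t ^ (2*n+2))"
  define L where "L = gen_laguerre (aa n) k X"
  have v: "v_unnorm n k t = E * L" unfolding v_unnorm_def E_def L_def X_def aa_def by simp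
  have "t ^ (2*n) * v_unnorm n k t * exp (t ^ (2*n+2) / (3 * (2 * real n + 2))) = t ^ (2*n) * (E * F) * L"
    unfolding v F_def by (simp only: ac_simps)
  also have "E * F = E2" unfolding E_def F_def E2_def by (rule Elap)
  also have "L = (\<Sum>i\<le>k. lc (aa n) k i * X ^ i)" unfolding L_def by (rule gen_laguerre_lc)
  also have "t ^ (2*n) * E2 * (\<Sum>i\<le>k. lc (aa n) k i * X ^ i) = (\<Sum>i\<le>k. t ^ (2*n) * E2 * (lc (aa n) k i * X ^ i))"
    by (simp add: sum_distrib_left)
  also have "\<dots> = (\<Sum>i\<le>k. (lc (aa n) k i / (real n + 1) ^ i) * (t ^ (2*n + (2*n+2)*i) * E2))"
  proof (intro sum.cong refl)
    fix i
    have a1: "X ^ i = t ^ ((2*n+2)*i) / (real n + 1) ^ i"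
      unfolding X_def power_divide power_mult by simp
    have a2: "t ^ (2*n) * t ^ ((2*n+2)*i) = t ^ (2*n + (2*n+2)*i)" by (simp add: power_add)
    have "t ^ (2*n) * E2 * (lc (aa n) k i * X ^ i) = lc (aa n) k i * E2 * (t ^ (2*n) * t ^ ((2*n+2)*i)) / (real n + 1) ^ i"
      unfolding a1 by (simp only: ac_simps times_divide_eq_left times_divide_eq_right)
    also have "\<dots> = (lc (aa n) k i / (real n + 1) ^ i) * (t ^ (2*n + (2*n+2)*i) * E2)"
      unfolding a2 by (simp only: ac_simps times_divide_eq_left times_divide_eq_right)
    finally show "t ^ (2*n) * E2 * (lc (aa n) k i * X ^ i) = (lc (aa n) k i / (real n + 1) ^ i) * (t ^ (2*n + (2*n+2)*i) * E2)" .
  qed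
  finally show ?thesis unfolding E2_def .
qed

lemma lap_integral:
  "((\<lambda>t. t ^ (2*n) * v_unnorm n k t * exp (t ^ (2*n+2) / (3 * (2 * real n + 2)))) has_integral
      (Wm n (1 / (3 * (real n + 1))) 0 * (pochhammer (aa n + 1) k / fact k) * (- 2) ^ k)) UNIV"
proof -
  define \<rho> where "\<rho> = 1 / (3 * (real n + 1))"
  have \<rho>: "\<rho> > 0" unfolding \<rho>_def by simp
  have "(\<Sum>i\<le>k. (lc (aa n) k i / (real n + 1) ^ i) * Wm n \<rho> i)
      = (\<Sum>i\<le>k. Wm n \<rho> 0 * (lc (aa n) k i * pochhammer (aa n + 1) i * 3 ^ i))"
  proof (intro sum.cong refl)
    fix i
    have "\<rho> ^ i = 1 / (3 ^ i * (real n + 1) ^ i)" unfolding \<rho>_def power_divide power_mult_distrib[symmetric] by simp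
    then show "(lc (aa n) k i / (real n + 1) ^ i) * Wm n \<rho> i = Wm n \<rho> 0 * (lc (aa n) k i * pochhammer (aa n + 1) i * 3 ^ i)"
      unfolding W_closed[OF \<rho>, of n i] by simp
  qed
  also have "\<dots> = Wm n \<rho> 0 * (\<Sum>i\<le>k. lc (aa n) k i * pochhammer (aa n + 1) i * 3 ^ i)"
    by (simp add: sum_distrib_left)
  also have "\<dots> = Wm n \<rho> 0 * (pochhammer (aa n + 1) k / fact k * (1 - 3) ^ k)" by (simp only: laplace_id)
  finally have val: "(\<Sum>i\<le>k. (lc (aa n) k i / (real n + 1) ^ i) * Wm n \<rho> i)
      = Wm n \<rho> 0 * (pochhammer (aa n + 1) k / fact k) * (- 2) ^ k" by simp
  have "((\<lambda>t. \<Sum>i\<le>k. (lc (aa n) k i / (real n + 1) ^ i) * (t ^ (2*n + (2*n+2)*i) * exp (- \<rho> * t ^ (2*n+2))))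
          has_integral (\<Sum>i\<le>k. (lc (aa n) k i / (real n + 1) ^ i) * Wm n \<rho> i)) UNIV"
    by (intro has_integral_sum finite_atMost has_integral_mult_right W_has \<rho>)
  then show ?thesis
    unfolding lap_pointwise \<rho>_def[symmetric] val .
qed


lemma v_unnorm_aa: "v_unnorm n k t = exp (- (t ^ (2*n+2)) / (2 * real n + 2)) * gen_laguerre (aa n) k (t ^ (2*n+2) / (real n + 1))"
  unfolding v_unnorm_def aa_def by simp

lemma E_deriv:
  "((\<lambda>t::real. exp (- (t ^ (2*n+2)) / (2 * real n + 2))) has_real_derivative
      - (t ^ (2*n+1)) * exp (- (t ^ (2*n+2)) / (2 * real n + 2))) (at t)"
proof -
  have d: "((\<lambda>t::real. - (t ^ (2*n+2)) / (2 * real n + 2)) has_real_derivative - (real (2*n+2) * t ^ (2*n+1)) / (2 * real n + 2)) (at t)"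
    using DERIV_cdivide[OF DERIV_minus[OF DERIV_pow[of "2*n+2" t]], of "2 * real n + 2"] by simp
  have e: "- (real (2*n+2) * t ^ (2*n+1)) / (2 * real n + 2) = - (t ^ (2*n+1))"
    by (simp add: field_simps)
  show ?thesis using DERIV_chain2[OF DERIV_exp d] unfolding e by (simp add: mult.commute)
qed

lemma X_deriv:
  "((\<lambda>t::real. t ^ (2*n+2) / (real n + 1)) has_real_derivative 2 * t ^ (2*n+1)) (at t)"
proof -
  have d: "((\<lambda>t::real. t ^ (2*n+2) / (real n + 1)) has_real_derivative (real (2*n+2) * t ^ (2*n+1)) / (real n + 1)) (at t)"
    using DERIV_cdivide[OF DERIV_pow[of "2*n+2" t], of "real n + 1"] by simp
  have e: "(real (2*n+2) * t ^ (2*n+1)) / (real n + 1) = 2 * t ^ (2*n+1)"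
    by (simp add: field_simps)
  show ?thesis using d unfolding e .
qed

lemma u_deriv:
  "(v_unnorm n k has_real_derivative
      - (t ^ (2*n+1)) * (v_unnorm n k t + 2 * (\<Sum>j<k. v_unnorm n j t))) (at t)"
proof (cases k)
  case 0
  have l0: "gen_laguerre (aa n) 0 x = 1" for x by (simp add: gen_laguerre_def)
  have "v_unnorm n 0 = (\<lambda>t. exp (- (t ^ (2*n+2)) / (2 * real n + 2)))"
    by (rule ext) (simp add: v_unnorm_aa l0)
  then show ?thesis using E_deriv[of n t] 0 by simp
next
  case (Suc m)
  define E where "E = (\<lambda>t::real. exp (- (t ^ (2*n+2)) / (2 * real n + 2)))"
  define X where "X = (\<lambda>t::real. t ^ (2*n+2) / (real n + 1))"
  have vf: "v_unnorm n j = (\<lambda>t. E t * gen_laguerre (aa n) j (X t))" for j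
    by (rule ext) (simp add: v_unnorm_aa E_def X_def)
  have dE: "(E has_real_derivative - (t ^ (2*n+1)) * E t) (at t)"
    unfolding E_def by (rule E_deriv)
  have dX: "(X has_real_derivative 2 * t ^ (2*n+1)) (at t)"
    unfolding X_def by (rule X_deriv)
  have dL: "((\<lambda>t. gen_laguerre (aa n) (Suc m) (X t)) has_real_derivative
      - gen_laguerre (aa n + 1) m (X t) * (2 * t ^ (2*n+1))) (at t)"
    by (rule DERIV_chain2[OF lag_deriv dX])
  have d: "((\<lambda>t. E t * gen_laguerre (aa n) (Suc m) (X t)) has_real_derivative
      - (t ^ (2*n+1)) * E t * gen_laguerre (aa n) (Suc m) (X t) +
      - gen_laguerre (aa n + 1) m (X t) * (2 * t ^ (2*n+1)) * E t) (at t)"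
    by (rule DERIV_mult[OF dE dL])
  have s: "E t * gen_laguerre (aa n + 1) m (X t) = (\<Sum>j<k. v_unnorm n j t)"
    unfolding lag_sum Suc lessThan_Suc_atMost vf by (simp add: sum_distrib_left)
  have fk: "v_unnorm n k = (\<lambda>t. E t * gen_laguerre (aa n) (Suc m) (X t))"
    using vf[of k] Suc by simp
  have eqv: "- (t ^ (2*n+1)) * E t * gen_laguerre (aa n) (Suc m) (X t) +
      - gen_laguerre (aa n + 1) m (X t) * (2 * t ^ (2*n+1)) * E t
      = - (t ^ (2*n+1)) * (v_unnorm n k t + 2 * (\<Sum>j<k. v_unnorm n j t))"
    unfolding s[symmetric] fk by (simp add: algebra_simps)
  show ?thesis by (rule DERIV_cong[OF d[folded fk] eqv])
qed



lemma arith_geo_closed: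
  fixes r :: real
  shows "(\<Sum>i<m. (real i + 1) * r ^ i) * (1 - r)\<^sup>2 = 1 - (real m + 1) * r ^ m + real m * r ^ (m + 1)"
proof (induction m)
  case 0 then show ?case by simp
next
  case (Suc m)
  have "(\<Sum>i<Suc m. (real i + 1) * r ^ i) * (1 - r)\<^sup>2 = (\<Sum>i<m. (real i + 1) * r ^ i) * (1 - r)\<^sup>2 + (real m + 1) * r ^ m * (1 - r)\<^sup>2"
    by (simp add: distrib_right)
  also have "\<dots> = 1 - (real m + 1) * r ^ m + real m * r ^ (m + 1) + (real m + 1) * r ^ m * (1 - r)\<^sup>2"
    using Suc by simp
  also have "\<dots> = 1 - (real (Suc m) + 1) * r ^ Suc m + real (Suc m) * r ^ (Suc m + 1)"
    by (simp add: power2_eq_square algebra_simps)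
  finally show ?case .
qed

lemma arith_geo_bound:
  fixes r :: real assumes r: "0 \<le> r" "r < 1"
  shows "(\<Sum>i<m. (real i + 2) * r ^ i) \<le> 2 / (1 - r)\<^sup>2"
proof -
  have pos: "(1 - r)\<^sup>2 > 0" using r by simp
  have "real m * r ^ (m + 1) \<le> (real m + 1) * r ^ m"
  proof -
    have "r ^ (m + 1) \<le> r ^ m" using r by (simp add: power_le_one mult_left_le_one_le)
    then have "real m * r ^ (m + 1) \<le> real m * r ^ m" by (simp add: mult_left_mono)
    also have "\<dots> \<le> (real m + 1) * r ^ m" using r by (simp add: mult_right_mono)
    finally show ?thesis .
  qed
  then have "(\<Sum>i<m. (real i + 1) * r ^ i) * (1 - r)\<^sup>2 \<le> 1" unfolding arith_geo_closed by simp
  then have A: "(\<Sum>i<m. (real i + 1) * r ^ i) \<le> 1 / (1 - r)\<^sup>2" using pos by (simp add: field_simps)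
  have "(\<Sum>i<m. r ^ i) = (1 - r ^ m) / (1 - r)" using r by (simp add: sum_gp_strict)
  also have "\<dots> \<le> 1 / (1 - r)" using r by (simp add: divide_right_mono)
  also have "\<dots> \<le> 1 / (1 - r)\<^sup>2"
  proof -
    have "(1 - r)\<^sup>2 \<le> 1 - r" using r by (simp add: power2_eq_square mult_left_le_one_le)
    then show ?thesis using r pos by (simp add: frac_le)
  qed
  finally have B: "(\<Sum>i<m. r ^ i) \<le> 1 / (1 - r)\<^sup>2" .
  have "(\<Sum>i<m. (real i + 2) * r ^ i) = (\<Sum>i<m. (real i + 1) * r ^ i) + (\<Sum>i<m. r ^ i)"
    by (simp add: sum.distrib[symmetric] algebra_simps)
  also have "\<dots> \<le> 1 / (1 - r)\<^sup>2 + 1 / (1 - r)\<^sup>2" using A B by simp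
  finally show ?thesis by simp
qed

lemma exp_poly_bound:
  fixes t \<epsilon> :: real assumes e: "0 < \<epsilon>" "\<epsilon> \<le> 1"
  shows "\<bar>t\<bar> ^ (2*n+1) * exp (- \<epsilon> * t ^ (2*n+2)) \<le> 1 / \<epsilon>\<^sup>2"
proof -
  define s where "s = t ^ (2*n+2)"
  have s0: "s \<ge> 0" unfolding s_def by (rule zero_le_even_power) simp
  have ts: "\<bar>t\<bar> ^ (2*n+1) \<le> 1 + s"
  proof (cases "\<bar>t\<bar> \<le> 1")
    case True
    then have "\<bar>t\<bar> ^ (2*n+1) \<le> 1" by (intro power_le_one) auto
    then show ?thesis using s0 by simp
  next
    case False
    then have "\<bar>t\<bar> ^ (2*n+1) \<le> \<bar>t\<bar> ^ (2*n+2)" by (intro power_increasing) auto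
    also have "\<bar>t\<bar> ^ (2*n+2) = s" unfolding s_def power_abs[symmetric] by (rule abs_of_nonneg, rule zero_le_even_power) simp
    finally show ?thesis by simp
  qed
  have ex: "1 + \<epsilon> * s \<le> exp (\<epsilon> * s)" by (rule exp_ge_add_one_self)
  have "(1 + s) \<le> (1 + \<epsilon> * s) / \<epsilon>" using e s0 by (simp add: field_simps)
  also have "\<dots> \<le> exp (\<epsilon> * s) / \<epsilon>" using ex e by (simp add: divide_right_mono)
  finally have A: "1 + s \<le> exp (\<epsilon> * s) / \<epsilon>" .
  have "(1 + s) * exp (- \<epsilon> * s) \<le> exp (\<epsilon> * s) / \<epsilon> * exp (- \<epsilon> * s)"
    by (rule mult_right_mono[OF A]) simp
  also have "\<dots> = 1 / \<epsilon>" by (simp add: exp_minus field_simps)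
  also have "\<dots> \<le> 1 / \<epsilon>\<^sup>2" using e by (simp add: power2_eq_square field_simps)
  finally have C: "(1 + s) * exp (- \<epsilon> * s) \<le> 1 / \<epsilon>\<^sup>2" .
  have D: "\<bar>t\<bar> ^ (2*n+1) * exp (- \<epsilon> * s) \<le> (1 + s) * exp (- \<epsilon> * s)"
    by (rule mult_right_mono[OF ts]) simp
  show ?thesis by (fold s_def) (rule order_trans[OF D C])
qed


lemma q_step:
  "pochhammer (a + 1) (Suc k) / fact (Suc k) = (pochhammer (a + 1) k / fact k) * ((a + 1 + real k) / (real k + 1))"
  by (simp add: pochhammer_Suc field_simps)

lemma q_pos: assumes "a > -1" shows "pochhammer (a + 1) k / fact k > (0::real)"
proof (induction k)
  case 0 then show ?case by simp
next
  case (Suc k)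
  have "(a + 1 + real k) / (real k + 1) > 0" using assms by (simp add: field_simps)
  then show ?case unfolding q_step by (rule mult_pos_pos[OF Suc.IH])
qed

lemma q_mono:
  assumes "a \<ge> -1/2" and "j \<le> k"
  shows "(real j + 1) * (pochhammer (a + 1) j / fact j) \<le> (real k + 1) * (pochhammer (a + 1) k / fact k)"
  using assms(2)
proof (induction k rule: dec_induct)
  case base then show ?case by simp
next
  case (step k)
  define q where "q = pochhammer (a + 1) k / fact k"
  have q0: "q > 0" unfolding q_def by (rule q_pos) (use assms in simp)
  have "(real k + 1) * (real k + 1) \<le> (real k + 2) * (a + 1 + real k)"
  proof -
    have "(real k + 2) * (real k + 1/2) \<le> (real k + 2) * (a + 1 + real k)"
      using assms by (intro mult_left_mono) auto
    moreover have "(real k + 1) * (real k + 1) \<le> (real k + 2) * (real k + 1/2)"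
      by (simp add: algebra_simps)
    ultimately show ?thesis by linarith
  qed
  then have X0: "q * ((real k + 1) * (real k + 1)) / (real k + 1) \<le> q * ((real k + 2) * (a + 1 + real k)) / (real k + 1)"
    using q0 by (intro divide_right_mono mult_left_mono) auto
  have "(real k + 1) * q = q * ((real k + 1) * (real k + 1)) / (real k + 1)" by simp
  also note X0
  also have "q * ((real k + 2) * (a + 1 + real k)) / (real k + 1) = (real (Suc k) + 1) * (q * ((a + 1 + real k) / (real k + 1)))"
    by simp
  finally have X: "(real k + 1) * q \<le> (real (Suc k) + 1) * (q * ((a + 1 + real k) / (real k + 1)))" .
  show ?case unfolding q_step q_def[symmetric] by (rule order_trans[OF step.IH[folded q_def] X])
qed

lemma four_pow: "(real k + 1)\<^sup>2 \<le> 4 ^ k"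
proof (induction k)
  case 0 then show ?case by simp
next
  case (Suc k)
  have "(real (Suc k) + 1)\<^sup>2 \<le> 4 * (real k + 1)\<^sup>2" by (simp add: power2_eq_square algebra_simps)
  also have "\<dots> \<le> 4 * 4 ^ k" using Suc by simp
  finally show ?case by simp
qed



lemma weighted_geo:
  fixes C :: real assumes C: "C > 1"
  shows "(\<Sum>j<k. (real (k - j) + 1) * C ^ (j + 1)) \<le> C ^ (k + 1) * (2 / (1 - 1 / C)\<^sup>2)"
proof -
  define r where "r = 1 / C"
  have r0: "0 \<le> r" and r1: "r < 1" using C unfolding r_def by auto
  have "(\<Sum>j<k. (real (k - j) + 1) * C ^ (j + 1)) = (\<Sum>i<k. (real (k - (k - Suc i)) + 1) * C ^ (k - Suc i + 1))"
    by (rule sum.nat_diff_reindex[symmetric])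
  also have "\<dots> \<le> (\<Sum>i<k. C ^ (k + 1) * ((real i + 2) * r ^ i))"
  proof (rule sum_mono)
    fix i assume "i \<in> {..<k}"
    then have ik: "i < k" by simp
    have e1: "real (k - (k - Suc i)) + 1 = real i + 2" using ik by simp
    have e2: "k - Suc i + 1 = k - i" using ik by simp
    have "C ^ (k - i) * C ^ (i + 1) = C ^ (k + 1)" using ik by (simp add: power_add[symmetric])
    then have "C ^ (k - i) = C ^ (k + 1) * r ^ (i + 1)" unfolding r_def using C
      by (simp add: power_one_over field_simps)
    also have "\<dots> \<le> C ^ (k + 1) * r ^ i"
      using r0 r1 C by (intro mult_left_mono power_decreasing) auto
    finally have "C ^ (k - i) \<le> C ^ (k + 1) * r ^ i" .
    then show "(real (k - (k - Suc i)) + 1) * C ^ (k - Suc i + 1) \<le> C ^ (k + 1) * ((real i + 2) * r ^ i)"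
      unfolding e1 e2 by (simp add: mult_left_mono mult.left_commute)
  qed
  also have "\<dots> = C ^ (k + 1) * (\<Sum>i<k. (real i + 2) * r ^ i)" by (simp add: sum_distrib_left)
  also have "\<dots> \<le> C ^ (k + 1) * (2 / (1 - r)\<^sup>2)"
    using C by (intro mult_left_mono arith_geo_bound r0 r1) auto
  finally show ?thesis unfolding r_def .
qed



theorem proposition5p5:
  fixes n :: nat and c :: "nat \<Rightarrow> real" and v :: "nat \<Rightarrow> real \<Rightarrow> real"
    and \<delta> B C0 :: real
  assumes v_def: "\<And>k t. v k t = c k * v_unnorm n k t"
    and c_pos: "\<And>k. c k > 0"
    and c_norm: "\<And>k. ((\<lambda>t. (t ^ n * v k t)\<^sup>2) has_integral 1) UNIV"
    and delta: "0 < \<delta>" "\<delta> \<le> 1/2"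
    and B_def: "B = (1 - \<delta> ^ (2*n+1)) / (2 * real n + 2)"
    and C0_pos: "C0 > 0"
    and C0_bound: "\<And>k t. \<bar>v k t\<bar> \<le> C0 ^ (k+1) * exp (- B * t ^ (2*n+2))"
  shows "\<exists>K>0. \<forall>B'. 0 < B' \<and> B' < B \<longrightarrow>
           (\<forall>k t. \<bar>deriv (v k) t\<bar> \<le> (K / (B - B')\<^sup>2) * C0 ^ k * exp (- B' * t ^ (2*n+2)))"
proof -
  define a where "a = aa n"
  have a_ge: "a \<ge> -1/2"
  proof -
    have "1 / (2 * real n + 2) \<le> 1 / 2" by (simp add: field_simps)
    then show ?thesis unfolding a_def aa_def by simp
  qed
  then have a_gt: "a > -1" by simp
  define q where "q = (\<lambda>k. pochhammer (a + 1) k / fact k)"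
  have qpos: "q k > 0" for k unfolding q_def by (rule q_pos[OF a_gt])
  define W1 where "W1 = Wm n (1 / (real n + 1)) 0"
  have csq: "(c k)\<^sup>2 * (W1 * q k) = 1" for k
  proof -
    have h1: "((\<lambda>t. (c k)\<^sup>2 * (t ^ n * v_unnorm n k t)\<^sup>2) has_integral (c k)\<^sup>2 * (W1 * q k)) UNIV"
      using has_integral_mult_right[OF norm_integral[of n k], of "(c k)\<^sup>2"] unfolding W1_def q_def a_def .
    have e: "(\<lambda>t. (t ^ n * v k t)\<^sup>2) = (\<lambda>t. (c k)\<^sup>2 * (t ^ n * v_unnorm n k t)\<^sup>2)"
      by (rule ext) (simp add: v_def power_mult_distrib ac_simps)
    show ?thesis using has_integral_unique[OF c_norm[of k, unfolded e] h1] by simp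
  qed
  have W1pos: "W1 > 0"
  proof -
    have "(c 0)\<^sup>2 * W1 = 1" using csq[of 0] by (simp add: q_def)
    then have "0 < (c 0)\<^sup>2 * W1" by simp
    moreover have "(c 0)\<^sup>2 > 0" using c_pos[of 0] by simp
    ultimately show ?thesis by (simp add: zero_less_mult_iff)
  qed
  have csq': "(c k)\<^sup>2 = 1 / (W1 * q k)" for k
    using csq[of k] W1pos qpos[of k] by (simp add: field_simps)
  have ratio: "c k \<le> (real (k - j) + 1) * c j" if jk: "j \<le> k" for j k
  proof -
    define D where "D = real (k - j) + 1"
    have D1: "D \<ge> 1" unfolding D_def by simp
    have qm: "(real j + 1) * q j \<le> (real k + 1) * q k" using q_mono[OF a_ge jk] by (simp add: q_def)
    have kj: "real k + 1 \<le> D\<^sup>2 * (real j + 1)"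
    proof -
      have e1: "real k + 1 = (real j + 1) + real (k - j)" using jk by simp
      have e2: "D * (real j + 1) = real (k - j) * (real j + 1) + (real j + 1)" unfolding D_def by (simp add: algebra_simps)
      have m1: "real (k - j) * 1 \<le> real (k - j) * (real j + 1)" by (rule mult_left_mono) auto
      have s1: "real k + 1 \<le> D * (real j + 1)" using e1 e2 m1 by linarith
      have "D * 1 \<le> D * D" using D1 by (intro mult_left_mono) auto
      then have "D * (real j + 1) \<le> (D * D) * (real j + 1)" by (intro mult_right_mono) auto
      then show ?thesis using s1 unfolding power2_eq_square by linarith
    qed
    have "(real j + 1) * q j \<le> (D\<^sup>2 * (real j + 1)) * q k"
      using order_trans[OF qm mult_right_mono[OF kj less_imp_le[OF qpos[of k]]]] .
    then have "(real j + 1) * q j \<le> (real j + 1) * (D\<^sup>2 * q k)" by (simp only: ac_simps)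
    then have qj: "q j \<le> D\<^sup>2 * q k" by (rule mult_left_le_imp_le) simp
    have "(c k)\<^sup>2 \<le> (D * c j)\<^sup>2"
    proof -
      define X where "X = W1 * q k"
      define Y where "Y = W1 * q j"
      have X0: "X > 0" unfolding X_def using W1pos qpos[of k] by simp
      have Y0: "Y > 0" unfolding Y_def using W1pos qpos[of j] by simp
      have YX: "Y \<le> D\<^sup>2 * X" unfolding X_def Y_def using mult_left_mono[OF qj less_imp_le[OF W1pos]] by (simp add: ac_simps)
      have D2: "D\<^sup>2 > 0" using D1 by simp
      have "1 / X = D\<^sup>2 / (D\<^sup>2 * X)" using D2 by simp
      also have "\<dots> \<le> D\<^sup>2 / Y" by (rule frac_le) (use D2 Y0 YX in auto)
      finally have "1 / X \<le> D\<^sup>2 / Y" .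
      then show ?thesis unfolding power_mult_distrib csq' X_def[symmetric] Y_def[symmetric] by simp
    qed
    then show ?thesis unfolding D_def[symmetric]
      by (rule power2_le_imp_le) (use D1 c_pos[of j] in simp)
  qed
  define d where "d = \<delta> ^ (2*n+1)"
  have dpow: "d \<le> 1/2"
  proof -
    have h: "\<delta> ^ (2*n+1) \<le> \<delta> ^ 1" by (rule power_decreasing) (use delta in auto)
    show ?thesis using h delta(2) unfolding power_one_right d_def by linarith
  qed
  have dpos: "d > 0" unfolding d_def using delta by simp
  have Bd: "B = (1 - d) / (2 * real n + 2)" unfolding B_def d_def ..
  have Bge: "B \<ge> 1 / (2 * (2 * real n + 2))"
  proof -
    have "(1/2) / (2 * real n + 2) \<le> (1 - d) / (2 * real n + 2)"
      using dpow by (intro divide_right_mono) auto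
    then show ?thesis unfolding Bd by simp
  qed
  have Ble: "B \<le> 1 / 2"
  proof -
    have "(1 - d) / (2 * real n + 2) \<le> 1 / (2 * real n + 2)"
      using dpos by (intro divide_right_mono) auto
    also have "\<dots> \<le> 1 / 2" by (simp add: field_simps)
    finally show ?thesis unfolding Bd .
  qed
  have Bpos: "B > 0" using Bge by (smt (verit) divide_pos_pos of_nat_0_le_iff)
  have evp: "t ^ (2*n) \<ge> 0" for t :: real by (rule zero_le_even_power) simp
  have evp2: "t ^ (2*n+2) \<ge> 0" for t :: real by (rule zero_le_even_power) simp
  define W2 where "W2 = Wm n (1 / (3 * (real n + 1))) 0"
  have W2ge: "W1 \<le> W2"
  proof -
    have h1: "((\<lambda>t. t ^ (2*n) * exp (- (1 / (real n + 1)) * t ^ (2*n+2))) has_integral W1) UNIV"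
      using W_has[of "1 / (real n + 1)" n 0] unfolding W1_def by simp
    have h2: "((\<lambda>t. t ^ (2*n) * exp (- (1 / (3 * (real n + 1))) * t ^ (2*n+2))) has_integral W2) UNIV"
      using W_has[of "1 / (3 * (real n + 1))" n 0] unfolding W2_def by simp
    show ?thesis
    proof (rule has_integral_le[OF h1 h2])
      fix t :: real
      have "1 / (3 * (real n + 1)) * t ^ (2*n+2) \<le> 1 / (real n + 1) * t ^ (2*n+2)"
        using evp2[of t] by (intro mult_right_mono) (auto simp: field_simps)
      then show "t ^ (2*n) * exp (- (1 / (real n + 1)) * t ^ (2*n+2)) \<le> t ^ (2*n) * exp (- (1 / (3 * (real n + 1))) * t ^ (2*n+2))"
        using evp[of t] by (intro mult_left_mono) auto
    qed
  qed
  have W2pos: "W2 > 0" using W2ge W1pos by simp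
  define \<rho>3 where "\<rho>3 = B - 1 / (3 * (2 * real n + 2))"
  have \<rho>3: "\<rho>3 > 0" unfolding \<rho>3_def using Bge by (simp add: field_simps)
  define W3 where "W3 = Wm n \<rho>3 0"
  have lapb: "c k * W2 * q k * 2 ^ k \<le> C0 ^ (k + 1) * W3" for k
  proof -
    define f where "f = (\<lambda>t. t ^ (2*n) * v k t * exp (t ^ (2*n+2) / (3 * (2 * real n + 2))))"
    define g where "g = (\<lambda>t. C0 ^ (k + 1) * (t ^ (2*n) * exp (- \<rho>3 * t ^ (2*n+2))))"
    have hf0: "((\<lambda>t. c k * (t ^ (2*n) * v_unnorm n k t * exp (t ^ (2*n+2) / (3 * (2 * real n + 2))))) has_integral
        c k * (W2 * q k * (- 2) ^ k)) UNIV"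
      using has_integral_mult_right[OF lap_integral[of n k], of "c k"] unfolding W2_def q_def a_def .
    have fe: "f = (\<lambda>t. c k * (t ^ (2*n) * v_unnorm n k t * exp (t ^ (2*n+2) / (3 * (2 * real n + 2)))))"
      unfolding f_def by (rule ext) (simp add: v_def ac_simps)
    have hf: "(f has_integral c k * (W2 * q k * (- 2) ^ k)) UNIV" unfolding fe by (rule hf0)
    have hg: "(g has_integral C0 ^ (k + 1) * W3) UNIV"
      unfolding g_def W3_def using has_integral_mult_right[OF W_has[OF \<rho>3, of n 0], of "C0 ^ (k + 1)"] by simp
    have fg: "\<bar>f t\<bar> \<le> g t" for t
    proof -
      have ee: "exp (- B * t ^ (2*n+2)) * exp (t ^ (2*n+2) / (3 * (2 * real n + 2))) = exp (- \<rho>3 * t ^ (2*n+2))"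
        unfolding \<rho>3_def by (simp add: exp_add[symmetric] algebra_simps)
      have "\<bar>f t\<bar> = t ^ (2*n) * \<bar>v k t\<bar> * exp (t ^ (2*n+2) / (3 * (2 * real n + 2)))"
        unfolding f_def using evp[of t] by (simp add: abs_mult)
      also have "\<dots> \<le> t ^ (2*n) * (C0 ^ (k+1) * exp (- B * t ^ (2*n+2))) * exp (t ^ (2*n+2) / (3 * (2 * real n + 2)))"
        using evp[of t] C0_bound[of k t] by (intro mult_right_mono mult_left_mono) auto
      also have "\<dots> = g t" unfolding g_def ee[symmetric] by (simp add: ac_simps)
      finally show ?thesis .
    qed
    have i1: "c k * (W2 * q k * (- 2) ^ k) \<le> C0 ^ (k + 1) * W3"
      by (rule has_integral_le[OF hf hg]) (use fg in \<open>auto simp: abs_le_iff\<close>)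
    have i2: "- (c k * (W2 * q k * (- 2) ^ k)) \<le> C0 ^ (k + 1) * W3"
      by (rule has_integral_le[OF has_integral_neg[OF hf] hg]) (use fg in \<open>auto simp: abs_le_iff\<close>)
    have "c k * W2 * q k * 2 ^ k = \<bar>c k * (W2 * q k * (- 2) ^ k)\<bar>"
      using c_pos[of k] W2pos qpos[of k] by (simp add: abs_mult power_abs)
    then show ?thesis using i1 i2 by linarith
  qed
  have C0gt: "C0 > 1"
  proof (rule ccontr)
    assume "\<not> C0 > 1"
    then have C0le: "C0 \<le> 1" by simp
    have W3pos: "W3 > 0"
    proof -
      have "0 < c 0 * W2 * q 0 * 2 ^ 0" using c_pos[of 0] W2pos qpos[of 0] by simp
      also have "\<dots> \<le> C0 ^ (0 + 1) * W3" by (rule lapb)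
      finally show ?thesis using C0_pos by (simp add: zero_less_mult_iff)
    qed
    define A where "A = W3\<^sup>2 * W1 / W2\<^sup>2"
    have bnd: "real k + 1 \<le> A" for k
    proof -
      have "c k * W2 * q k * 2 ^ k \<le> C0 ^ (k + 1) * W3" by (rule lapb)
      also have "\<dots> \<le> 1 * W3" using C0le C0_pos W3pos by (intro mult_right_mono power_le_one) auto
      finally have l1: "c k * W2 * q k * 2 ^ k \<le> W3" by simp
      have l0: "0 \<le> c k * W2 * q k * 2 ^ k" using c_pos[of k] W2pos qpos[of k] by simp
      have "(c k * W2 * q k * 2 ^ k)\<^sup>2 \<le> W3\<^sup>2" by (rule power_mono[OF l1 l0])
      moreover have "(c k * W2 * q k * 2 ^ k)\<^sup>2 = W2\<^sup>2 * q k * 4 ^ k / W1"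
      proof -
        have "(c k * W2 * q k * 2 ^ k)\<^sup>2 = (c k)\<^sup>2 * W2\<^sup>2 * (q k)\<^sup>2 * (2 ^ k)\<^sup>2" by (simp add: power_mult_distrib)
        also have "(2::real) ^ k * 2 ^ k = 4 ^ k" by (simp add: power_mult_distrib[symmetric])
        then have "((2::real) ^ k)\<^sup>2 = 4 ^ k" by (simp add: power2_eq_square)
        finally show ?thesis unfolding csq' using W1pos qpos[of k] by (simp add: power2_eq_square field_simps)
      qed
      ultimately have "W2\<^sup>2 * q k * 4 ^ k / W1 \<le> W3\<^sup>2" by simp
      then have l2: "W2\<^sup>2 * q k * 4 ^ k \<le> W3\<^sup>2 * W1" using W1pos by (simp add: divide_le_eq)
      have qk: "1 \<le> (real k + 1) * q k" using q_mono[OF a_ge, of 0 k] by (simp add: q_def)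
      have "W2\<^sup>2 * 4 ^ k \<le> W2\<^sup>2 * q k * 4 ^ k * (real k + 1)"
        using qk W2pos by (simp add: mult_left_mono ac_simps)
      also have "\<dots> \<le> W3\<^sup>2 * W1 * (real k + 1)" using l2 by (intro mult_right_mono) auto
      finally have "4 ^ k \<le> A * (real k + 1)" unfolding A_def using W2pos by (simp add: field_simps)
      moreover have "(real k + 1) * (real k + 1) \<le> 4 ^ k" using four_pow[of k] by (simp add: power2_eq_square)
      ultimately have "(real k + 1) * (real k + 1) \<le> A * (real k + 1)" by linarith
      then show ?thesis by (simp add: mult_le_cancel_right_pos)
    qed
    have "real (nat \<lceil>A\<rceil>) + 1 \<le> A" by (rule bnd)
    moreover have "A \<le> real (nat \<lceil>A\<rceil>)" by linarith
    ultimately show False by simp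
  qed
  define S where "S = 2 / (1 - 1 / C0)\<^sup>2"
  have S0: "S \<ge> 0" unfolding S_def by simp
  define K where "K = C0 * (1 + 2 * S)"
  have K0: "K > 0" unfolding K_def using C0_pos S0 by simp
  have dv: "deriv (v k) t = c k * (- (t ^ (2*n+1)) * (v_unnorm n k t + 2 * (\<Sum>j<k. v_unnorm n j t)))" for k t
  proof -
    have vk: "v k = (\<lambda>t. c k * v_unnorm n k t)" by (rule ext) (simp add: v_def)
    show ?thesis unfolding vk by (rule DERIV_imp_deriv[OF DERIV_cmult[OF u_deriv]])
  qed
  show ?thesis
  proof (intro exI[of _ K] conjI allI impI)
    show "K > 0" by (rule K0)
    fix B' :: real and k :: nat and t :: real
    assume B': "0 < B' \<and> B' < B"
    define \<epsilon> where "\<epsilon> = B - B'"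
    have e0: "0 < \<epsilon>" and e1: "\<epsilon> \<le> 1" unfolding \<epsilon>_def using B' Ble by auto
    define T where "T = \<bar>t\<bar> ^ (2*n+1)"
    have T0: "T \<ge> 0" unfolding T_def by simp
    define Ex where "Ex = exp (- B * t ^ (2*n+2))"
    have sumb: "(\<Sum>j<k. (real (k - j) + 1) * C0 ^ (j + 1)) \<le> C0 ^ (k + 1) * S"
      unfolding S_def by (rule weighted_geo[OF C0gt])
    have inner: "\<bar>c k * v_unnorm n k t + 2 * (\<Sum>j<k. c k * v_unnorm n j t)\<bar>
        \<le> \<bar>v k t\<bar> + 2 * (\<Sum>j<k. (real (k - j) + 1) * \<bar>v j t\<bar>)"
    proof -
      have "\<bar>c k * v_unnorm n k t + 2 * (\<Sum>j<k. c k * v_unnorm n j t)\<bar>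
          \<le> \<bar>c k * v_unnorm n k t\<bar> + 2 * \<bar>\<Sum>j<k. c k * v_unnorm n j t\<bar>"
        by (metis abs_mult abs_of_nonneg abs_triangle_ineq zero_le_numeral)
      also have "\<bar>\<Sum>j<k. c k * v_unnorm n j t\<bar> \<le> (\<Sum>j<k. \<bar>c k * v_unnorm n j t\<bar>)" by (rule sum_abs)
      also have "\<dots> \<le> (\<Sum>j<k. (real (k - j) + 1) * \<bar>v j t\<bar>)"
      proof (rule sum_mono)
        fix j assume "j \<in> {..<k}"
        then have "j \<le> k" by simp
        have "\<bar>c k * v_unnorm n j t\<bar> = c k * \<bar>v_unnorm n j t\<bar>" using c_pos[of k] by (simp add: abs_mult)
        also have "\<dots> \<le> ((real (k - j) + 1) * c j) * \<bar>v_unnorm n j t\<bar>"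
          by (rule mult_right_mono[OF ratio[OF \<open>j \<le> k\<close>]]) simp
        also have "\<dots> = (real (k - j) + 1) * \<bar>v j t\<bar>" using c_pos[of j] by (simp add: v_def abs_mult)
        finally show "\<bar>c k * v_unnorm n j t\<bar> \<le> (real (k - j) + 1) * \<bar>v j t\<bar>" .
      qed
      finally show ?thesis by (simp add: v_def)
    qed
    have inner2: "\<bar>v k t\<bar> + 2 * (\<Sum>j<k. (real (k - j) + 1) * \<bar>v j t\<bar>)
        \<le> (C0 ^ (k + 1) + 2 * (\<Sum>j<k. (real (k - j) + 1) * C0 ^ (j + 1))) * Ex"
    proof -
      have "(\<Sum>j<k. (real (k - j) + 1) * \<bar>v j t\<bar>) \<le> (\<Sum>j<k. (real (k - j) + 1) * (C0 ^ (j + 1) * Ex))"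
      proof (rule sum_mono)
        fix j
        show "(real (k - j) + 1) * \<bar>v j t\<bar> \<le> (real (k - j) + 1) * (C0 ^ (j + 1) * Ex)"
          unfolding Ex_def by (rule mult_left_mono[OF C0_bound]) simp
      qed
      also have "\<dots> = (\<Sum>j<k. (real (k - j) + 1) * C0 ^ (j + 1)) * Ex"
        by (simp only: sum_distrib_right mult.assoc)
      finally have "(\<Sum>j<k. (real (k - j) + 1) * \<bar>v j t\<bar>) \<le> (\<Sum>j<k. (real (k - j) + 1) * C0 ^ (j + 1)) * Ex" .
      moreover have "\<bar>v k t\<bar> \<le> C0 ^ (k + 1) * Ex" unfolding Ex_def by (rule C0_bound)
      ultimately show ?thesis by (simp add: algebra_simps)
    qed
    have inner3: "(C0 ^ (k + 1) + 2 * (\<Sum>j<k. (real (k - j) + 1) * C0 ^ (j + 1))) * Ex \<le> K * C0 ^ k * Ex"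
    proof -
      have "C0 ^ (k + 1) + 2 * (\<Sum>j<k. (real (k - j) + 1) * C0 ^ (j + 1)) \<le> C0 ^ (k + 1) + 2 * (C0 ^ (k + 1) * S)"
        using sumb by simp
      also have "\<dots> = K * C0 ^ k" unfolding K_def by (simp add: algebra_simps)
      finally show ?thesis by (rule mult_right_mono) (simp add: Ex_def)
    qed
    have "\<bar>deriv (v k) t\<bar> = T * \<bar>c k * v_unnorm n k t + 2 * (\<Sum>j<k. c k * v_unnorm n j t)\<bar>"
    proof -
      have "\<bar>deriv (v k) t\<bar> = \<bar>t ^ (2*n+1)\<bar> * \<bar>c k * (v_unnorm n k t + 2 * (\<Sum>j<k. v_unnorm n j t))\<bar>"
        unfolding dv by (simp add: abs_mult)
      also have "c k * (v_unnorm n k t + 2 * (\<Sum>j<k. v_unnorm n j t)) = c k * v_unnorm n k t + 2 * (\<Sum>j<k. c k * v_unnorm n j t)"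
        by (simp add: algebra_simps sum_distrib_left)
      finally show ?thesis unfolding T_def power_abs .
    qed
    also have "\<dots> \<le> T * (K * C0 ^ k * Ex)"
      using order_trans[OF inner order_trans[OF inner2 inner3]] T0 by (rule mult_left_mono)
    also have "\<dots> = K * C0 ^ k * (T * exp (- \<epsilon> * t ^ (2*n+2))) * exp (- B' * t ^ (2*n+2))"
    proof -
      have "Ex = exp (- \<epsilon> * t ^ (2*n+2)) * exp (- B' * t ^ (2*n+2))"
        unfolding Ex_def \<epsilon>_def by (simp add: exp_add[symmetric] algebra_simps)
      then show ?thesis by (simp add: ac_simps)
    qed
    also have "\<dots> \<le> K * C0 ^ k * (1 / \<epsilon>\<^sup>2) * exp (- B' * t ^ (2*n+2))"
      using exp_poly_bound[OF e0 e1, of t n] K0 C0_pos unfolding T_def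
      by (intro mult_right_mono mult_left_mono) auto
    also have "\<dots> = (K / (B - B')\<^sup>2) * C0 ^ k * exp (- B' * t ^ (2*n+2))"
      unfolding \<epsilon>_def by simp
    finally show "\<bar>deriv (v k) t\<bar> \<le> (K / (B - B')\<^sup>2) * C0 ^ k * exp (- B' * t ^ (2*n+2))" .
  qed
qed


end
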